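(* Every pair-symmetric grid-labelled graph (with at least one edge) is separable.
   Context: A grid-labelled graph of type $(a,b)$ is a simple graph $G$ whose vertex set is the grid $[a]\times[b]$. If $G$ has $m\ge1$ edges, $\rho(G)=L(G)/(2m)$, where $L(G)$ is the combinatorial Laplacian, viewed as a density matrix on $\mathbb{C}^a\otimes\mathbb{C}^b$ with vertex $(i,j)$ corresponding to $|i\rangle\otimes|j\rangle$; $G$ is separable if $\rho(G)$ is a convex combination of tensor products of density matrices. An edge $\{(i,j),(k,l)\}$ is diagonal if $i\neq k$ and $j\neq l$. $G$ is pair-symmetric if for each diagonal edge $\{(i,j),(k,l)\}\in E(G)$, the edge $\{(k,j),(i,l)\}$ also belongs to $E(G)$. *)

theory Defs
  imports Complex_Main
begin

(* Matrices of dimension n are functions nat => nat => complex, only the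
   entries with indices < n being relevant. Grid vertices are (i,j) with
   i < a, j < b (0-based); vertex (i,j) corresponds to basis index i*b+j,
   i.e. |i> (x) |j> in C^a (x) C^b. *)

definition grid :: "nat \<Rightarrow> nat \<Rightarrow> (nat \<times> nat) set" where
  "grid a b = {0..<a} \<times> {0..<b}"

definition grid_graph :: "nat \<Rightarrow> nat \<Rightarrow> (nat \<times> nat) set set \<Rightarrow> bool" where
  "grid_graph a b E \<longleftrightarrow>
     (\<forall>e\<in>E. \<exists>u v. u \<in> grid a b \<and> v \<in> grid a b \<and> u \<noteq> v \<and> e = {u, v})"

definition vtx :: "nat \<Rightarrow> nat \<Rightarrow> nat \<times> nat" where
  "vtx b r = (r div b, r mod b)"

definition laplacian :: "nat \<Rightarrow> (nat \<times> nat) set set \<Rightarrow> nat \<Rightarrow> nat \<Rightarrow> complex" where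
  "laplacian b E r c =
     (if r = c then of_nat (card {e \<in> E. vtx b r \<in> e})
      else if {vtx b r, vtx b c} \<in> E then -1 else 0)"

definition rho :: "nat \<Rightarrow> (nat \<times> nat) set set \<Rightarrow> nat \<Rightarrow> nat \<Rightarrow> complex" where
  "rho b E r c = laplacian b E r c / of_nat (2 * card E)"

definition density_matrix :: "nat \<Rightarrow> (nat \<Rightarrow> nat \<Rightarrow> complex) \<Rightarrow> bool" where
  "density_matrix n M \<longleftrightarrow>
     (\<forall>i<n. \<forall>j<n. M j i = cnj (M i j)) \<and>
     (\<forall>v :: nat \<Rightarrow> complex. 0 \<le> Re (\<Sum>i<n. \<Sum>j<n. cnj (v i) * M i j * v j)) \<and>
     (\<Sum>i<n. M i i) = 1"

definition kron :: "nat \<Rightarrow> (nat \<Rightarrow> nat \<Rightarrow> complex) \<Rightarrow> (nat \<Rightarrow> nat \<Rightarrow> complex)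
                      \<Rightarrow> nat \<Rightarrow> nat \<Rightarrow> complex" where
  "kron b A B r c = A (r div b) (c div b) * B (r mod b) (c mod b)"

definition separable :: "nat \<Rightarrow> nat \<Rightarrow> (nat \<Rightarrow> nat \<Rightarrow> complex) \<Rightarrow> bool" where
  "separable a b R \<longleftrightarrow>
     (\<exists>(N::nat) (p :: nat \<Rightarrow> real) A B.
        (\<forall>k<N. 0 \<le> p k \<and> density_matrix a (A k) \<and> density_matrix b (B k)) \<and>
        (\<Sum>k<N. p k) = 1 \<and>
        (\<forall>r<a*b. \<forall>c<a*b. R r c = (\<Sum>k<N. complex_of_real (p k) * kron b (A k) (B k) r c)))"

definition pair_symmetric :: "(nat \<times> nat) set set \<Rightarrow> bool" where
  "pair_symmetric E \<longleftrightarrow>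
     (\<forall>i j k l. {(i, j), (k, l)} \<in> E \<and> i \<noteq> k \<and> j \<noteq> l \<longrightarrow> {(k, j), (i, l)} \<in> E)"

end

theory Submission imports Defs begin

definition ind :: "nat \<Rightarrow> nat \<Rightarrow> complex" where "ind t x = (if t = x then 1 else 0)"
lemma cnj_ind[simp]: "cnj (ind t x) = ind t x" by (simp add: ind_def)
lemma ind_sq: "ind t x * ind t x = ind t x" by (simp add: ind_def)

lemma dens_gen:
  fixes g :: "nat \<Rightarrow> complex"
  assumes cg: "\<And>t. cnj (g t) = g t" and s: "(\<Sum>t<n. g t * g t) = of_real c" and c: "c > 0"
  shows "density_matrix n (\<lambda>i j. g i * g j / of_real c)"
  unfolding density_matrix_def
proof (intro conjI allI impI)
  fix i j show "g j * g i / of_real c = cnj (g i * g j / of_real c)"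
    using cg by (simp add: mult.commute)
next
  fix v :: "nat \<Rightarrow> complex"
  define z where "z = (\<Sum>j<n. g j * v j)"
  have cz: "cnj z = (\<Sum>i<n. cnj (v i) * g i)" unfolding z_def using cg by (simp add: mult.commute)
  have "(\<Sum>i<n. \<Sum>j<n. cnj (v i) * (g i * g j / of_real c) * v j) = (cnj z * z) / of_real c"
  proof -
    have "cnj z * z = (\<Sum>i<n. \<Sum>j<n. cnj (v i) * g i * (g j * v j))"
      unfolding cz unfolding z_def sum_product by simp
    then show ?thesis by (simp add: sum_divide_distrib algebra_simps)
  qed
  also have "\<dots> = of_real ((norm z)^2 / c)"
  proof -
    have "cnj z * z = of_real ((norm z)^2)" by (metis complex_norm_square mult.commute)
    then show ?thesis by simp
  qed
  finally show "0 \<le> Re (\<Sum>i<n. \<Sum>j<n. cnj (v i) * (g i * g j / of_real c) * v j)"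
    using c by simp
next
  show "(\<Sum>i<n. g i * g i / of_real c) = 1" using s c by (simp add: sum_divide_distrib[symmetric])
qed

definition st1 :: "nat \<Rightarrow> nat \<Rightarrow> nat \<Rightarrow> complex" where "st1 x i j = ind i x * ind j x"
definition hv :: "complex \<Rightarrow> nat \<Rightarrow> nat \<Rightarrow> nat \<Rightarrow> complex" where "hv s x y t = ind t x + s * ind t y"
definition st2 :: "complex \<Rightarrow> nat \<Rightarrow> nat \<Rightarrow> nat \<Rightarrow> nat \<Rightarrow> complex" where
  "st2 s x y i j = hv s x y i * hv s x y j / 2"

lemma st1_dens: "x < n \<Longrightarrow> density_matrix n (st1 x)"
proof -
  assume x: "x < n"
  have "(\<Sum>t<n. ind t x * ind t x) = of_real 1" using x by (simp add: ind_sq) (simp add: ind_def)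
  from dens_gen[OF cnj_ind this] have "density_matrix n (\<lambda>i j. ind i x * ind j x / of_real 1)" by simp
  moreover have "(\<lambda>i j. ind i x * ind j x / of_real 1) = st1 x" by (simp add: fun_eq_iff st1_def)
  ultimately show ?thesis by simp
qed

lemma st2_dens: assumes "s = 1 \<or> s = -1" "x < n" "y < n" "x \<noteq> y"
  shows "density_matrix n (st2 s x y)"
proof -
  have cg: "\<And>t. cnj (hv s x y t) = hv s x y t" using assms(1) by (auto simp: hv_def)
  have pt: "\<And>t. hv s x y t * hv s x y t = ind t x + ind t y" using assms(1,4)
    by (auto simp: hv_def ind_def)
  have "(\<Sum>t<n. hv s x y t * hv s x y t) = of_real 2" unfolding pt sum.distrib using assms(2,3)
    by (simp add: ind_def)
  from dens_gen[OF cg this] have "density_matrix n (\<lambda>i j. hv s x y i * hv s x y j / of_real 2)" by simp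
  moreover have "(\<lambda>i j. hv s x y i * hv s x y j / of_real 2) = st2 s x y" by (simp add: fun_eq_iff st2_def)
  ultimately show ?thesis by simp
qed

definition Lr :: "(nat \<times> nat) set \<Rightarrow> nat \<times> nat \<Rightarrow> nat \<times> nat \<Rightarrow> complex" where
  "Lr e u w = (if u \<in> e \<and> w \<in> e then (if u = w then 1 else -1) else 0)"

lemma Lr_pair: assumes "(i,j) \<noteq> (k,l)"
  shows "Lr {(i,j),(k,l)} u w = (ind (fst u) i * ind (snd u) j - ind (fst u) k * ind (snd u) l)
      * (ind (fst w) i * ind (snd w) j - ind (fst w) k * ind (snd w) l)"
  using assms by (cases u; cases w) (auto simp: Lr_def ind_def)

lemma sum_split2: "(\<Sum>k<m+n. g k) = (\<Sum>k<m. g k) + (\<Sum>k<n. g (m+k))" for m n :: nat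
  by (induction n) (simp_all add: add.assoc)

definition ep :: "(nat \<times> nat) set \<Rightarrow> (nat \<times> nat) \<times> (nat \<times> nat)" where
  "ep e = (SOME pq. fst pq \<noteq> snd pq \<and> e = {fst pq, snd pq})"

lemma ep_spec: assumes "p \<noteq> q" "e = {p,q}" shows "fst (ep e) \<noteq> snd (ep e) \<and> e = {fst (ep e), snd (ep e)}"
  unfolding ep_def by (rule someI[where x="(p,q)"]) (use assms in simp)

lemma ep_cases: assumes "p \<noteq> q" shows "ep {p,q} = (p,q) \<or> ep {p,q} = (q,p)"
proof -
  from ep_spec[OF assms refl] have "{p,q} = {fst (ep {p,q}), snd (ep {p,q})}" by simp
  then show ?thesis by (metis doubleton_eq_iff prod.collapse)
qed

definition sig :: "(nat \<times> nat) set \<Rightarrow> (nat \<times> nat) set" where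
  "sig e = (case ep e of ((i,j),(k,l)) \<Rightarrow> if i \<noteq> k \<and> j \<noteq> l then {(k,j),(i,l)} else e)"
definition A1 where "A1 e = (case ep e of ((i,j),(k,l)) \<Rightarrow> if i = k then st1 i else st2 (-1) i k)"
definition B1 where "B1 e = (case ep e of ((i,j),(k,l)) \<Rightarrow> if i = k then st2 (-1) j l else if j = l then st1 j else st2 1 j l)"
definition A2 where "A2 e = (case ep e of ((i,j),(k,l)) \<Rightarrow> if i = k then st1 i else if j = l then st2 (-1) i k else st2 1 i k)"
definition B2 where "B2 e = (case ep e of ((i,j),(k,l)) \<Rightarrow> if i = k then st2 (-1) j l else if j = l then st1 j else st2 (-1) j l)"

lemma core:
  assumes ep: "ep e = ((i,j),(k,l))" and ne: "(i,j) \<noteq> (k,l)" and e: "e = {(i,j),(k,l)}"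
  shows "kron b (A1 e) (B1 e) r c + kron b (A2 e) (B2 e) r c
       = (Lr e (vtx b r) (vtx b c) + Lr (sig e) (vtx b r) (vtx b c)) / 2"
proof -
  have Le: "Lr e u w = (ind (fst u) i * ind (snd u) j - ind (fst u) k * ind (snd u) l)
      * (ind (fst w) i * ind (snd w) j - ind (fst w) k * ind (snd w) l)" for u w
    using Lr_pair[OF ne] e by simp
  consider "i = k" | "i \<noteq> k" "j = l" | "i \<noteq> k" "j \<noteq> l" by blast
  then show ?thesis
  proof cases
    case 1
    then show ?thesis
      by (simp add: ep Le sig_def A1_def A2_def B1_def B2_def kron_def vtx_def st1_def st2_def hv_def
          field_simps; algebra?)
  next
    case 2
    then show ?thesis
      by (simp add: ep Le sig_def A1_def A2_def B1_def B2_def kron_def vtx_def st1_def st2_def hv_def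
          field_simps; algebra?)
  next
    case 3
    have "(k,j) \<noteq> (i,l)" using 3 by simp
    have Le2: "Lr {(k,j),(i,l)} u w = (ind (fst u) k * ind (snd u) j - ind (fst u) i * ind (snd u) l)
      * (ind (fst w) k * ind (snd w) j - ind (fst w) i * ind (snd w) l)" for u w
      using Lr_pair[OF \<open>(k,j) \<noteq> (i,l)\<close>] by simp
    from 3 show ?thesis
      by (simp add: ep Le Le2 sig_def A1_def A2_def B1_def B2_def kron_def vtx_def st1_def st2_def hv_def
          field_simps; algebra?)
  qed
qed

lemma edge_info:
  assumes gg: "grid_graph a b E" and eE: "e \<in> E"
  shows "\<exists>i j k l. ep e = ((i,j),(k,l)) \<and> (i,j) \<noteq> (k,l) \<and> e = {(i,j),(k,l)} \<and> i < a \<and> k < a \<and> j < b \<and> l < b"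
proof -
  from gg eE obtain u v where uv: "u \<in> grid a b" "v \<in> grid a b" "u \<noteq> v" "e = {u,v}"
    unfolding grid_graph_def by blast
  from ep_spec[OF uv(3,4)] have sp: "fst (ep e) \<noteq> snd (ep e)" "e = {fst (ep e), snd (ep e)}" by auto
  have "fst (ep e) \<in> grid a b" "snd (ep e) \<in> grid a b" using sp(2) uv by (metis insertCI insertE singletonD)+
  then show ?thesis using sp unfolding grid_def
    by (cases "ep e") (auto simp: prod_eq_iff)
qed

lemma dens_all:
  assumes gg: "grid_graph a b E" and eE: "e \<in> E"
  shows "density_matrix a (A1 e) \<and> density_matrix b (B1 e) \<and> density_matrix a (A2 e) \<and> density_matrix b (B2 e)"
proof -
  from edge_info[OF gg eE] obtain i j k l where I: "ep e = ((i,j),(k,l))" "(i,j) \<noteq> (k,l)"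
    "i < a" "k < a" "j < b" "l < b" by blast
  show ?thesis using I
    by (auto simp: A1_def A2_def B1_def B2_def intro!: st1_dens st2_dens)
qed

lemma sig_in:
  assumes gg: "grid_graph a b E" and eE: "e \<in> E" and ps: "pair_symmetric E"
  shows "sig e \<in> E"
proof -
  from edge_info[OF gg eE] obtain i j k l where I: "ep e = ((i,j),(k,l))" "e = {(i,j),(k,l)}" by blast
  show ?thesis using I eE ps unfolding pair_symmetric_def sig_def by auto
qed

lemma sig_sig:
  assumes gg: "grid_graph a b E" and eE: "e \<in> E"
  shows "sig (sig e) = e"
proof -
  from edge_info[OF gg eE] obtain i j k l where I: "ep e = ((i,j),(k,l))" "e = {(i,j),(k,l)}" by blast
  show ?thesis
  proof (cases "i \<noteq> k \<and> j \<noteq> l")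
    case True
    then have s: "sig e = {(k,j),(i,l)}" using I by (simp add: sig_def)
    have "(k,j) \<noteq> (i,l)" using True by simp
    from ep_cases[OF this] show ?thesis
      using True I unfolding s by (auto simp: sig_def insert_commute)
  next
    case False
    then have "sig e = e" using I(1) by (auto simp: sig_def)
    then show ?thesis by simp
  qed
qed

lemma lap_sum:
  assumes gg: "grid_graph a b E" and fin: "finite E" and r: "r < a*b" and c: "c < a*b"
  shows "laplacian b E r c = (\<Sum>e\<in>E. Lr e (vtx b r) (vtx b c))"
proof (cases "r = c")
  case True
  have "(\<Sum>e\<in>E. Lr e (vtx b r) (vtx b c)) = (\<Sum>e\<in>E. if vtx b r \<in> e then 1 else 0)"
    using True by (simp add: Lr_def)
  also have "\<dots> = of_nat (card {e \<in> E. vtx b r \<in> e})"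
    using fin by (simp add: sum.If_cases Int_def conj_commute)
  finally show ?thesis using True by (simp add: laplacian_def)
next
  case False
  have "b > 0" using r by (cases b) auto
  then have uw: "vtx b r \<noteq> vtx b c" using False unfolding vtx_def
    by (metis div_mult_mod_eq prod.inject)
  have "(\<Sum>e\<in>E. Lr e (vtx b r) (vtx b c)) = (\<Sum>e\<in>E. if e = {vtx b r, vtx b c} then -1 else 0)"
  proof (rule sum.cong[OF refl])
    fix e assume "e \<in> E"
    with gg obtain x y where "x \<noteq> y" "e = {x,y}" unfolding grid_graph_def by blast
    then show "Lr e (vtx b r) (vtx b c) = (if e = {vtx b r, vtx b c} then -1 else 0)"
      using uw unfolding Lr_def by auto
  qed
  also have "\<dots> = (if {vtx b r, vtx b c} \<in> E then -1 else 0)"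
    using fin by (simp add: sum.delta')
  finally show ?thesis using False by (simp add: laplacian_def)
qed

lemma sum_sig:
  assumes gg: "grid_graph a b E" and ps: "pair_symmetric E"
  shows "(\<Sum>e\<in>E. g (sig e)) = (\<Sum>e\<in>E. g e)"
  by (rule sum.reindex_bij_witness[where i=sig and j=sig])
     (auto simp: sig_sig[OF gg] sig_in[OF gg _ ps])

lemma core_sum:
  assumes gg: "grid_graph a b E" and ps: "pair_symmetric E"
  shows "(\<Sum>e\<in>E. kron b (A1 e) (B1 e) r c + kron b (A2 e) (B2 e) r c) = (\<Sum>e\<in>E. Lr e (vtx b r) (vtx b c))"
proof -
  have "(\<Sum>e\<in>E. kron b (A1 e) (B1 e) r c + kron b (A2 e) (B2 e) r c)
     = (\<Sum>e\<in>E. (Lr e (vtx b r) (vtx b c) + Lr (sig e) (vtx b r) (vtx b c)) / 2)"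
  proof (rule sum.cong[OF refl])
    fix e assume "e \<in> E"
    from edge_info[OF gg this] obtain i j k l where "ep e = ((i,j),(k,l))" "(i,j) \<noteq> (k,l)" "e = {(i,j),(k,l)}"
      by blast
    from core[OF this] show "kron b (A1 e) (B1 e) r c + kron b (A2 e) (B2 e) r c
       = (Lr e (vtx b r) (vtx b c) + Lr (sig e) (vtx b r) (vtx b c)) / 2" .
  qed
  also have "\<dots> = ((\<Sum>e\<in>E. Lr e (vtx b r) (vtx b c)) + (\<Sum>e\<in>E. Lr (sig e) (vtx b r) (vtx b c))) / 2"
    by (simp only: sum_divide_distrib[symmetric] sum.distrib)
  also have "\<dots> = (\<Sum>e\<in>E. Lr e (vtx b r) (vtx b c))"
    using sum_sig[OF gg ps, of "\<lambda>e. Lr e (vtx b r) (vtx b c)"] by simp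
  finally show ?thesis .
qed

theorem mainTheorem8:
  fixes a b :: nat and E :: "(nat \<times> nat) set set"
  assumes "grid_graph a b E"
    and "card E \<ge> 1"
    and "pair_symmetric E"
  shows "separable a b (rho b E)"
proof -
  note gg = assms(1) and ps = assms(3)
  define m where "m = card E"
  have fin: "finite E" using assms(2) card_ge_0_finite[of E] by linarith
  have m0: "m > 0" using assms(2) unfolding m_def by simp
  obtain f where bij: "bij_betw f {..<m} E"
    using ex_bij_betw_nat_finite[OF fin] unfolding m_def atLeast0LessThan by blast
  have fE: "k < m \<Longrightarrow> f k \<in> E" for k using bij by (auto dest: bij_betwE)
  define A where "A k = (if k < m then A1 (f k) else A2 (f (k - m)))" for k
  define B where "B k = (if k < m then B1 (f k) else B2 (f (k - m)))" for k
  define p :: "nat \<Rightarrow> real" where "p k = 1 / (2 * real m)" for k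
  show ?thesis unfolding separable_def
  proof (rule exI[of _ "m+m"], rule exI[of _ p], rule exI[of _ A], rule exI[of _ B], intro conjI allI impI)
    fix k assume k: "k < m + m"
    show "0 \<le> p k" by (simp add: p_def)
    have "density_matrix a (A k) \<and> density_matrix b (B k)"
      proof (cases "k < m")
        case True then show ?thesis using dens_all[OF gg fE[OF True]] by (simp add: A_def B_def)
      next
        case False then have "k - m < m" using k by simp
        then show ?thesis using dens_all[OF gg fE[OF \<open>k - m < m\<close>]] False by (simp add: A_def B_def)
      qed
    then show "density_matrix a (A k)" by auto
  next
    fix k assume k: "k < m + m"
    have "density_matrix a (A k) \<and> density_matrix b (B k)"
      proof (cases "k < m")
        case True then show ?thesis using dens_all[OF gg fE[OF True]] by (simp add: A_def B_def)
      next
        case False then have "k - m < m" using k by simp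
        then show ?thesis using dens_all[OF gg fE[OF \<open>k - m < m\<close>]] False by (simp add: A_def B_def)
      qed
    then show "density_matrix b (B k)" by auto
  next
    show "(\<Sum>k<m+m. p k) = 1" using m0 by (simp add: p_def)
  next
    fix r c assume r: "r < a * b" and c: "c < a * b"
    have "(\<Sum>k<m+m. complex_of_real (p k) * kron b (A k) (B k) r c)
        = of_real (1 / (2 * real m)) * (\<Sum>k<m+m. kron b (A k) (B k) r c)"
      by (simp add: p_def sum_distrib_left)
    also have "(\<Sum>k<m+m. kron b (A k) (B k) r c)
        = (\<Sum>k<m. kron b (A1 (f k)) (B1 (f k)) r c) + (\<Sum>k<m. kron b (A2 (f k)) (B2 (f k)) r c)"
      by (simp add: sum_split2 A_def B_def)
    also have "\<dots> = (\<Sum>e\<in>E. kron b (A1 e) (B1 e) r c) + (\<Sum>e\<in>E. kron b (A2 e) (B2 e) r c)"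
      using sum.reindex_bij_betw[OF bij, of "\<lambda>e. kron b (A1 e) (B1 e) r c"]
            sum.reindex_bij_betw[OF bij, of "\<lambda>e. kron b (A2 e) (B2 e) r c"] by simp
    also have "\<dots> = (\<Sum>e\<in>E. Lr e (vtx b r) (vtx b c))"
      using core_sum[OF gg ps, of r c] by (simp add: sum.distrib)
    also have "\<dots> = laplacian b E r c" using lap_sum[OF gg fin r c] by simp
    finally show "rho b E r c = (\<Sum>k<m+m. complex_of_real (p k) * kron b (A k) (B k) r c)"
      unfolding rho_def m_def[symmetric] by (simp add: field_simps)
  qed
qed

end
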